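(* Let $d/2<k<d$ be integers with $(2k-d)^2<4k-d-2$. Then $A''(t)>0$ for all $t\ge1$, and $A'(1)=\frac{k\,(4k-d-2-(2k-d)^2)}{2d(d-1)}$.
   Context: $g(t)=\binom dk^{-1}\sum_{j=0}^{d-k}\binom kj\binom{d-k}{j}t^j$ and $A(t)=(t+1)g(t)-\frac{d}{2(d-k)}g(t)-\frac{t(t+1)g'(t)}{k}$. *)

theory Defs
  imports "HOL-Analysis.Analysis"
begin

definition g :: "nat \<Rightarrow> nat \<Rightarrow> real \<Rightarrow> real" where
  "g d k t = inverse (real (d choose k)) *
     (\<Sum>j=0..d-k. real (k choose j) * real ((d-k) choose j) * t ^ j)"

definition A :: "nat \<Rightarrow> nat \<Rightarrow> real \<Rightarrow> real" where
  "A d k t = (t + 1) * g d k t - real d / (2 * real (d - k)) * g d k t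
             - t * (t + 1) * deriv (g d k) t / real k"

end

theory Submission imports Defs "HOL-Computational_Algebra.Polynomial" begin

lemma comb_id:
  fixes k m i :: nat
  assumes "m < k" "i \<le> m"
  shows "(\<Sum>j\<le>m. (k choose j) * (m choose j) * (j choose i)) = (m choose i) * ((k+m-i) choose (k-i))"
proof -
  have "(\<Sum>j\<le>m. (k choose j) * (m choose j) * (j choose i)) = (\<Sum>j\<in>{i..m}. (k choose j) * (m choose j) * (j choose i))"
    by (rule sum.mono_neutral_right) auto
  also have "\<dots> = (\<Sum>j\<in>{i..m}. (m choose i) * ((k choose j) * ((m - i) choose (j - i))))"
  proof (rule sum.cong)
    fix j assume "j \<in> {i..m}"
    then have "(m choose j) * (j choose i) = (m choose i) * ((m - i) choose (j - i))"
      using choose_mult[of i j m] by auto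
    then show "(k choose j) * (m choose j) * (j choose i) = (m choose i) * ((k choose j) * ((m - i) choose (j - i)))"
      by (metis mult.assoc mult.left_commute)
  qed simp
  also have "\<dots> = (m choose i) * (\<Sum>j\<in>{i..m}. (k choose j) * ((m - i) choose (j - i)))"
    by (simp add: sum_distrib_left)
  also have "(\<Sum>j\<in>{i..m}. (k choose j) * ((m - i) choose (j - i))) = (\<Sum>l\<le>m-i. (k choose (i+l)) * ((m - i) choose l))"
  proof -
    have "(\<Sum>l\<le>m-i. (k choose (i+l)) * ((m - i) choose l)) = (\<Sum>j\<in>(\<lambda>l. i+l) ` {..m-i}. (k choose j) * ((m - i) choose (j - i)))"
      by (subst sum.reindex) (auto simp: inj_on_def)
    moreover have "(\<lambda>l. i+l) ` {..m-i} = {i..m}"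
      using assms apply (auto simp: image_iff)
      subgoal for x by (rule bexI[of _ "x - i"]) auto
      done
    ultimately show ?thesis by simp
  qed
  also have "\<dots> = (\<Sum>l\<le>k-i. ((m - i) choose l) * (k choose (k - i - l)))"
  proof -
    have "(\<Sum>l\<le>k-i. ((m - i) choose l) * (k choose (k - i - l))) = (\<Sum>l\<le>m-i. ((m - i) choose l) * (k choose (k - i - l)))"
      using assms by (intro sum.mono_neutral_right) auto
    also have "\<dots> = (\<Sum>l\<le>m-i. (k choose (i+l)) * ((m - i) choose l))"
    proof (rule sum.cong)
      fix l assume "l \<in> {..m-i}"
      then have "i + l \<le> k" using assms by auto
      then have "k choose (k - i - l) = k choose (i+l)"
        using binomial_symmetric[of "i+l" k] by (simp add: diff_diff_add)
      then show "((m - i) choose l) * (k choose (k - i - l)) = (k choose (i+l)) * ((m - i) choose l)" by simp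
    qed simp
    finally show ?thesis by simp
  qed
  also have "\<dots> = (m - i + k) choose (k - i)" by (rule vandermonde)
  also have "m - i + k = k + m - i" using assms by simp
  finally show ?thesis by simp
qed

definition bb :: "nat \<Rightarrow> nat \<Rightarrow> nat \<Rightarrow> real" where
  "bb d k n = real ((d-k) choose n) * real ((d-n) choose (k-n)) / real (d choose k)"

definition Bp :: "nat \<Rightarrow> nat \<Rightarrow> real poly" where
  "Bp d k = (\<Sum>n\<le>d-k. monom (bb d k n) n)"

lemma coeff_Bp: "coeff (Bp d k) n = bb d k n"
  by (auto simp: Bp_def coeff_sum coeff_monom bb_def)

lemma poly_Bp: "poly (Bp d k) x = (\<Sum>n\<le>d-k. bb d k n * x^n)"
  by (simp add: Bp_def poly_sum poly_monom)

lemma g_eq: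
  assumes "d - k < k" "k \<le> d"
  shows "g d k t = poly (Bp d k) (t - 1)"
proof -
  define m where "m = d - k"
  have mk: "m < k" using assms m_def by simp
  have dkm: "d = k + m" using assms m_def by simp
  have pw: "t ^ j = (\<Sum>i\<le>m. real (j choose i) * (t-1)^i)" if "j \<le> m" for j
  proof -
    have "t ^ j = ((t-1) + 1) ^ j" by simp
    also have "\<dots> = (\<Sum>i\<le>j. real (j choose i) * (t-1)^i)"
      by (subst binomial_ring) simp
    also have "\<dots> = (\<Sum>i\<le>m. real (j choose i) * (t-1)^i)"
      using that by (intro sum.mono_neutral_left) auto
    finally show ?thesis .
  qed
  have "(\<Sum>j=0..m. real (k choose j) * real (m choose j) * t ^ j)
      = (\<Sum>j\<le>m. \<Sum>i\<le>m. real ((k choose j) * (m choose j) * (j choose i)) * (t-1)^i)"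
    unfolding atLeast0AtMost
    by (intro sum.cong refl) (simp add: pw sum_distrib_left mult.assoc)
  also have "\<dots> = (\<Sum>i\<le>m. \<Sum>j\<le>m. real ((k choose j) * (m choose j) * (j choose i)) * (t-1)^i)"
    by (rule sum.swap)
  also have "\<dots> = (\<Sum>i\<le>m. real ((m choose i) * ((k+m-i) choose (k-i))) * (t-1)^i)"
  proof (intro sum.cong refl)
    fix i assume i: "i \<in> {..m}"
    have "(\<Sum>j\<le>m. real ((k choose j) * (m choose j) * (j choose i)) * (t-1)^i)
       = real (\<Sum>j\<le>m. (k choose j) * (m choose j) * (j choose i)) * (t-1)^i"
      by (simp only: of_nat_sum sum_distrib_right)
    also have "\<dots> = real ((m choose i) * ((k+m-i) choose (k-i))) * (t-1)^i"
      using comb_id[OF mk, of i] i by simp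
    finally show "(\<Sum>j\<le>m. real ((k choose j) * (m choose j) * (j choose i)) * (t-1)^i) = \<dots>" .
  qed
  finally have *: "(\<Sum>j=0..m. real (k choose j) * real (m choose j) * t ^ j) = \<dots>" .
  show ?thesis
    unfolding g_def poly_Bp m_def[symmetric] * bb_def
    by (simp add: sum_distrib_left dkm field_simps)
qed

lemma deriv_shift: "deriv (\<lambda>t. poly p (t - 1)) x = poly (pderiv p) (x - 1)"
proof -
  have "((\<lambda>t. poly p (t - 1)) has_field_derivative poly (pderiv p) (x - 1) * 1) (at x)"
    by (rule DERIV_chain2[OF poly_DERIV]) (auto intro!: derivative_eq_intros)
  then show ?thesis by (simp add: DERIV_imp_deriv)
qed

lemma deriv_shift_fun: "deriv (\<lambda>t. poly p (t - 1)) = (\<lambda>x. poly (pderiv p) (x - 1))"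
  using deriv_shift by blast

definition Ep :: "nat \<Rightarrow> nat \<Rightarrow> real poly" where
  "Ep d k = [:2,1:] * Bp d k - smult (real d / (2 * real (d - k))) (Bp d k)
      - smult (1 / real k) ([:2,3,1:] * pderiv (Bp d k))"

lemma A_fun:
  assumes "d - k < k" "k \<le> d"
  shows "A d k = (\<lambda>t. poly (Ep d k) (t - 1))"
proof
  fix t
  have gf: "g d k = (\<lambda>t. poly (Bp d k) (t - 1))" using g_eq[OF assms] by blast
  show "A d k t = poly (Ep d k) (t - 1)"
    unfolding A_def Ep_def gf deriv_shift
    by (simp add: algebra_simps power2_eq_square add_divide_distrib)
qed

definition ee :: "nat \<Rightarrow> nat \<Rightarrow> nat \<Rightarrow> real" where
  "ee d k j = 2 * bb d k (Suc j) + bb d k j - real d / (2 * real (d - k)) * bb d k (Suc j)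
     - (2 * real (j+2) * bb d k (j+2) + 3 * real (j+1) * bb d k (j+1) + real j * bb d k j) / real k"

lemma coeff_Ep: "coeff (Ep d k) (Suc j) = ee d k j"
  by (cases j) (simp_all add: Ep_def ee_def coeff_pderiv coeff_Bp algebra_simps add_divide_distrib diff_divide_distrib)

lemma N_pos:
  fixes n m k :: real
  assumes n2: "n \<ge> 2" and nm: "n \<le> m" and mk: "m < k"
    and cond: "(k-m)^2 < 2*m + 3*(k-m) - 2"
  shows "0 < n*m*(2*(k-m)^2 + (4*n+5*(m-n)-1)*(k-m) + 2*m*(m-1)) - (m-n+1)*(k-m)^2*((k-m)+(m-n))"
proof -
  define s where "s = k - m"
  define p where "p = m - n"
  have s1: "s > 0" using mk s_def by simp
  have p0: "p \<ge> 0" using nm p_def by simp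
  have mnp: "m = n + p" using p_def by simp
  have c: "s^2 \<le> 2*m + 3* s - 2" using cond s_def by simp
  have sp0: "s + p \<ge> 0" using s1 p0 by simp
  have h1: "(p+1)* s^2*(s+p) \<le> (p+1)*(2*m+3* s-2)*(s+p)"
    using c p0 sp0 by (intro mult_right_mono mult_left_mono) auto
  have Q0: "(2*m+3* s-2)*(s+p) \<ge> 0" using n2 mnp s1 p0 by (intro mult_nonneg_nonneg) auto
  have h2: "(p+1)*(2*m+3* s-2)*(s+p) \<le> m*(2*m+3* s-2)*(s+p)"
    using Q0 mnp n2 by (simp add: mult.assoc mult_right_mono)
  have idt: "n*(2* s^2 + (4*n+5*p-1)* s + 2*m*(m-1)) - (2*m+3* s-2)*(s+p)
     = (2*n-3)* s^2 + (n*(4*n-3)+2+5*p*(n-1))* s + 2*(n+p-1)*(n*(n+p)-p)"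
    by (simp add: mnp algebra_simps power2_eq_square)
  have t1: "(2*n-3)* s^2 > 0" using n2 s1 by simp
  have t2: "(n*(4*n-3)+2+5*p*(n-1))* s \<ge> 0" using n2 s1 p0
    by (intro mult_nonneg_nonneg add_nonneg_nonneg) auto
  have t3a: "n*(n+p) - p \<ge> 0"
  proof -
    have "n*(n+p) \<ge> 1*(n+p)" using n2 p0 by (intro mult_right_mono) auto
    then show ?thesis using n2 by simp
  qed
  have t3: "2*(n+p-1)*(n*(n+p)-p) \<ge> 0" using t3a n2 p0 by simp
  have h3: "(2*m+3* s-2)*(s+p) < n*(2* s^2 + (4*n+5*p-1)* s + 2*m*(m-1))"
    using idt t1 t2 t3 by linarith
  have m0: "m > 0" using n2 nm by simp
  have h4: "m*((2*m+3* s-2)*(s+p)) < m*(n*(2* s^2 + (4*n+5*p-1)* s + 2*m*(m-1)))"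
    using h3 m0 by simp
  have "(p+1)* s^2*(s+p) < n*m*(2* s^2 + (4*n+5*p-1)* s + 2*m*(m-1))"
    using h1 h2 h4 by (simp add: algebra_simps)
  then show ?thesis unfolding s_def[symmetric] p_def[symmetric] by (simp add: algebra_simps)
qed

lemma key_real:
  fixes n m k x y z :: real
  assumes n2: "n \<ge> 2" and nm: "n \<le> m" and mk: "m < k"
    and cond: "(k-m)^2 < 2*m + 3*(k-m) - 2" and x0: "x > 0"
    and ra: "n*(k+m-n+1)*x = (m-n+1)*(k-n+1)*y"
    and rb: "(n+1)*(k+m-n)*z = (m-n)*(k-n)*x"
  shows "0 < 2*x + y - (k+m)/(2*m)*x - (2*(n+1)*z + 3*n*x + (n-1)*y)/k"
proof -
  have d1: "(m-n+1)*(k-n+1) > 0" using n2 nm mk by simp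
  have d2: "(n+1)*(k+m-n) > 0" using n2 nm mk by simp
  have ey: "y = n*(k+m-n+1)*x / ((m-n+1)*(k-n+1))" using ra d1 by (simp add: field_simps)
  have ez: "z = (m-n)*(k-n)*x / ((n+1)*(k+m-n))" using rb d2 by (simp add: field_simps)
  define N0 where "N0 = k*(k+m-n)*(m-n+1)*(3*m-k) - 6*n*m*(k+m-n)*(m-n+1)
     - 4*m*(m-n)*(k-n)*(m-n+1) + 2*m*n*(k+m-n+1)*(k+m-n)"
  have m0: "m > 0" "k > 0" "k+m-n > 0" "m-n+1>0" "k-n+1 > 0" "n+1 > 0" using n2 nm mk by auto
  define L where "L = 2*x + y - (k+m)/(2*m)*x - (2*(n+1)*z + 3*n*x + (n-1)*y)/k"
  have e1: "L * (2*m*k) = (4*m*k - (k+m)*k - 6*m*n)*x + 2*m*(k-n+1)*y - 4*m*(n+1)*z"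
    unfolding L_def using m0 by (simp add: field_simps)
  have e2: "((4*m*k - (k+m)*k - 6*m*n)*x + 2*m*(k-n+1)*y - 4*m*(n+1)*z) * ((k+m-n)*(m-n+1))
     = (4*m*k - (k+m)*k - 6*m*n)*x*((k+m-n)*(m-n+1)) + 2*m*(k+m-n)*((m-n+1)*(k-n+1)*y)
       - 4*m*(m-n+1)*((n+1)*(k+m-n)*z)"
    by (simp add: algebra_simps)
  also have "\<dots> = x * N0"
    unfolding ra[symmetric] rb N0_def by (simp add: algebra_simps)
  finally have e2': "((4*m*k - (k+m)*k - 6*m*n)*x + 2*m*(k-n+1)*y - 4*m*(n+1)*z) * ((k+m-n)*(m-n+1)) = x * N0" .
  have e3: "L * ((2*m*k) * ((k+m-n)*(m-n+1))) = x * N0"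
    by (subst mult.assoc[symmetric], subst e1, rule e2')
  have "N0 = n*m*(2*(k-m)^2 + (4*n+5*(m-n)-1)*(k-m) + 2*m*(m-1)) - (m-n+1)*(k-m)^2*((k-m)+(m-n))"
    unfolding N0_def by (simp add: algebra_simps power2_eq_square power3_eq_cube)
  then have "N0 > 0" using N_pos[OF n2 nm mk cond] by simp
  then have "L * ((2*m*k) * ((k+m-n)*(m-n+1))) > 0" using e3 x0 by simp
  moreover have "(2*m*k) * ((k+m-n)*(m-n+1)) > 0" using m0 by simp
  ultimately have "L > 0" using zero_less_mult_pos2 by blast
  then show ?thesis unfolding L_def .
qed


lemma bb_ratio:
  assumes "d - k < k" "k \<le> d"
  shows "real (Suc n) * real (d - n) * bb d k (Suc n) = real (d - k - n) * real (k - n) * bb d k n"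
proof (cases "n < d - k")
  case True
  define m where "m = d - k"
  have nm: "n < m" using True m_def by simp
  have c1: "Suc n * (m choose Suc n) = (m - n) * (m choose n)"
    using binomial_absorption[of n m] binomial_absorb_comp[of m n] by simp
  have nk: "0 < k - n" using assms True by simp
  have c2: "(k-n) * ((d-n) choose (k-n)) = (d-n) * ((d - Suc n) choose (k - Suc n))"
    using times_binomial_minus1_eq[OF nk, of "d-n"] by (simp add: diff_diff_add)
  have c1r: "real (Suc n) * real (m choose Suc n) = real (m - n) * real (m choose n)"
    using c1 by (metis of_nat_mult)
  have c2r: "real (k-n) * real ((d-n) choose (k-n)) = real (d-n) * real ((d - Suc n) choose (k - Suc n))"
    using c2 by (metis of_nat_mult)
  have "real (Suc n) * real (d - n) * bb d k (Suc n)
      = (real (Suc n) * real (m choose Suc n)) * (real (d-n) * real ((d - Suc n) choose (k - Suc n))) / real (d choose k)"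
    unfolding bb_def m_def by simp
  also have "\<dots> = (real (m - n) * real (m choose n)) * (real (k-n) * real ((d-n) choose (k-n))) / real (d choose k)"
    unfolding c1r c2r ..
  also have "\<dots> = real (d - k - n) * real (k - n) * bb d k n"
    unfolding bb_def m_def by simp
  finally show ?thesis .
next
  case False
  then show ?thesis by (simp add: bb_def)
qed

lemma bb_pos:
  assumes "k \<le> d" "n \<le> d - k"
  shows "bb d k n > 0"
  using assms unfolding bb_def by (simp add: zero_less_binomial_iff)

lemma bb_zero:
  assumes "d - k < n"
  shows "bb d k n = 0"
  using assms unfolding bb_def by simp

lemma bb_0:
  assumes "k \<le> d"
  shows "bb d k 0 = 1"
  using assms unfolding bb_def by (simp add: zero_less_binomial_iff)

lemma ee_pos:
  assumes mk: "d - k < k" and kd: "k \<le> d"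
    and cond: "(2 * real k - real d)^2 < 4 * real k - real d - 2"
    and j1: "1 \<le> j" and jm: "j \<le> d - k"
  shows "ee d k j > 0"
proof (cases "j = d - k")
  case True
  have z1: "bb d k (Suc j) = 0" "bb d k (Suc (Suc j)) = 0" using True by (simp_all add: bb_zero)
  have y0: "bb d k j > 0" using bb_pos[OF kd jm] .
  have kk: "real k > real j" using True mk by simp
  have "ee d k j = bb d k j * (real k - real j) / real k"
    unfolding ee_def using z1 kk by (simp add: numeral_2_eq_2 field_simps)
  then show ?thesis using y0 kk by simp
next
  case False
  then have jm': "j < d - k" using jm by simp
  define n where "n = real (Suc j)"
  define m where "m = real (d - k)"
  define kr where "kr = real k"
  have rd: "real d = kr + m" using kd unfolding kr_def m_def by simp
  have n2: "n \<ge> 2" using j1 n_def by simp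
  have nm: "n \<le> m" using jm' n_def m_def by simp
  have mkr: "m < kr" using mk m_def kr_def by simp
  have cnd: "(kr-m)^2 < 2*m + 3*(kr-m) - 2" using cond rd by (simp add: kr_def algebra_simps)
  have x0: "bb d k (Suc j) > 0" using bb_pos[OF kd] jm' by simp
  note r1 = bb_ratio[OF mk kd, of j]
  note r2 = bb_ratio[OF mk kd, of "Suc j"]
  have c1: "real (d - j) = kr + m - n + 1" "real (d - k - j) = m - n + 1" "real (k - j) = kr - n + 1"
    using jm' mk kd unfolding n_def m_def kr_def by (simp_all add: of_nat_diff)
  have c2: "real (d - Suc j) = kr + m - n" "real (d - k - Suc j) = m - n" "real (k - Suc j) = kr - n"
    "real (Suc (Suc j)) = n + 1"
    using jm' mk kd unfolding n_def m_def kr_def by (simp_all add: of_nat_diff)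
  have ra: "n*(kr+m-n+1)*bb d k (Suc j) = (m-n+1)*(kr-n+1)*bb d k j"
    using r1 unfolding c1 n_def by simp
  have rb: "(n+1)*(kr+m-n)*bb d k (Suc (Suc j)) = (m-n)*(kr-n)*bb d k (Suc j)"
    using r2 unfolding c2 by simp
  note K = key_real[OF n2 nm mkr cnd x0 ra rb]
  have c3: "real (j+2) = n + 1" "real (j+1) = n" "real j = n - 1" unfolding n_def by simp_all
  show ?thesis unfolding ee_def c3 rd m_def[symmetric] using K by (simp add: kr_def numeral_2_eq_2)
qed

lemma ee_zero:
  assumes "d - k < j"
  shows "ee d k j = 0"
  using assms unfolding ee_def by (simp add: bb_zero)

lemma coeff_Q: "coeff (pderiv (pderiv (Ep d k))) i = real (Suc i) * real (Suc (Suc i)) * ee d k (Suc i)"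
  by (simp add: coeff_pderiv coeff_Ep[symmetric])

theorem lemma14:
  fixes d k :: nat
  assumes "real d / 2 < real k" and "k < d"
    and "(2 * real k - real d)^2 < 4 * real k - real d - 2"
  shows "(\<forall>t::real. t \<ge> 1 \<longrightarrow> deriv (deriv (A d k)) t > 0)
       \<and> deriv (A d k) 1 = real k * (4 * real k - real d - 2 - (2 * real k - real d)^2)
                              / (2 * real d * (real d - 1))"
proof
  have mk: "d - k < k" using assms(1) by linarith
  have kd: "k \<le> d" using assms(2) by simp
  note cond = assms(3)
  have dA: "deriv (A d k) = (\<lambda>x. poly (pderiv (Ep d k)) (x - 1))"
    unfolding A_fun[OF mk kd] deriv_shift_fun ..
  have ddA: "deriv (deriv (A d k)) = (\<lambda>x. poly (pderiv (pderiv (Ep d k))) (x - 1))"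
    unfolding dA deriv_shift_fun ..
  show "\<forall>t::real. t \<ge> 1 \<longrightarrow> deriv (deriv (A d k)) t > 0"
  proof (intro allI impI)
    fix t :: real assume t1: "t \<ge> 1"
    define Q where "Q = pderiv (pderiv (Ep d k))"
    define u where "u = t - 1"
    have u0: "u \<ge> 0" using t1 u_def by simp
    have nn: "coeff Q i * u ^ i \<ge> 0" for i
    proof -
      have "ee d k (Suc i) \<ge> 0"
      proof (cases "Suc i \<le> d - k")
        case True then show ?thesis using ee_pos[OF mk kd cond, of "Suc i"] by simp
      next
        case False then show ?thesis using ee_zero[of d k "Suc i"] by simp
      qed
      then show ?thesis unfolding Q_def coeff_Q using u0 by simp
    qed
    have c0: "coeff Q 0 > 0"
    proof -
      have "1 \<le> d - k" using assms(2) by simp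
      then have "ee d k 1 > 0" using ee_pos[OF mk kd cond, of 1] by simp
      then show ?thesis unfolding Q_def coeff_Q by simp
    qed
    have "coeff Q 0 * u ^ 0 \<le> (\<Sum>i\<le>degree Q. coeff Q i * u ^ i)"
      by (rule member_le_sum) (use nn in auto)
    then have "poly Q u > 0" unfolding poly_altdef using c0 by simp
    then show "deriv (deriv (A d k)) t > 0" unfolding ddA Q_def u_def .
  qed
  show "deriv (A d k) 1 = real k * (4 * real k - real d - 2 - (2 * real k - real d)^2)
                              / (2 * real d * (real d - 1))"
  proof -
    have "deriv (A d k) 1 = ee d k 0"
      unfolding dA by (simp add: poly_0_coeff_0 coeff_pderiv coeff_Ep)
    also have "ee d k 0 = real k * (4 * real k - real d - 2 - (2 * real k - real d)^2)
                              / (2 * real d * (real d - 1))"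
    proof -
      define m where "m = real (d - k)"
      define kr where "kr = real k"
      have rd: "real d = kr + m" using kd unfolding kr_def m_def by simp
      have m1: "m \<ge> 1" using assms(2) m_def by simp
      have k1: "kr > m" using mk m_def kr_def by simp
      note r1 = bb_ratio[OF mk kd, of 0]
      note r2 = bb_ratio[OF mk kd, of 1]
      have b0: "bb d k 0 = 1" using bb_0[OF kd] .
      have e1: "real d * bb d k 1 = m * kr" using r1 b0 unfolding m_def kr_def by simp
      have c: "real (d - 1) = kr + m - 1" "real (d - k - 1) = m - 1" "real (k - 1) = kr - 1"
        using assms(2) mk kd unfolding m_def kr_def by (simp_all add: of_nat_diff)
      have e2: "2 * (kr + m - 1) * bb d k 2 = (m - 1) * (kr - 1) * bb d k 1"
        using r2 unfolding c by (simp add: numeral_2_eq_2)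
      have d0: "kr + m > 0" "kr + m - 1 > 0" "kr > 0" "m > 0" using m1 k1 by auto
      define dd where "dd = real d"
      define b1 where "b1 = bb d k 1"
      define b2 where "b2 = bb d k 2"
      have F1: "dd * b1 = m * kr" using e1 unfolding dd_def b1_def .
      have F2: "2 * (dd - 1) * b2 = (m - 1) * (kr - 1) * b1" using e2 unfolding dd_def b2_def b1_def rd .
      have E0: "ee d k 0 = 2*b1 + 1 - dd/(2*m)*b1 - (4*b2 + 3*b1)/kr"
        unfolding ee_def b1_def b2_def dd_def m_def kr_def using b0 by (simp add: numeral_2_eq_2)
      have S1: "ee d k 0 * (2*dd*(dd-1)) = 2*(dd-1)*(2*(dd*b1) + dd) - (dd-1)*dd*(dd*b1)/m
           - 6*(dd-1)*(dd*b1)/kr - 4*dd*(2*(dd-1)*b2)/kr"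
        unfolding E0 using d0 by (simp add: field_simps) (simp add: algebra_simps)?
      also have "\<dots> = 2*(dd-1)*(2*(dd*b1) + dd) - (dd-1)*dd*(dd*b1)/m
           - 6*(dd-1)*(dd*b1)/kr - 4*dd*((m - 1) * (kr - 1) * b1)/kr"
        unfolding F2 ..
      also have "\<dots> = 2*(dd-1)*(2*(dd*b1) + dd) - (dd-1)*dd*(dd*b1)/m
           - 6*(dd-1)*(dd*b1)/kr - 4*(m - 1)*(kr - 1)*(dd*b1)/kr"
        by (simp add: algebra_simps)
      also have "\<dots> = 2*(dd-1)*(2*(m*kr) + dd) - (dd-1)*dd*(m*kr)/m
           - 6*(dd-1)*(m*kr)/kr - 4*(m - 1)*(kr - 1)*(m*kr)/kr"
        unfolding F1 ..
      also have "\<dots> = kr * (4 * kr - dd - 2 - (2 * kr - dd)^2)"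
        unfolding F1 using d0 rd unfolding dd_def by (simp add: field_simps) (simp add: algebra_simps power2_eq_square)?
      finally have S2: "ee d k 0 * (2*dd*(dd-1)) = kr * (4 * kr - dd - 2 - (2 * kr - dd)^2)" .
      have "2*dd*(dd-1) \<noteq> 0" using d0 rd unfolding dd_def by simp
      then show ?thesis using S2 unfolding dd_def kr_def by (simp add: eq_divide_eq)
    qed
    finally show ?thesis .
  qed
qed

end
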